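(* If two elements of $H$ are conjugate in $A_1(H)$, then they are conjugate in $H$.
   Context: Let $H$ be a group and $\{F_i\}_{i\in I}$ the set of all finitely generated abelian subgroups of $H$; let $C_i=C_H(F_i)$. Write $\Delta_K=\{(k,k):k\in K\}$ and $\Delta'_F=\{(f^{-1},f):f\in F\}$ in $H\times H$. $A_1(H)$ is the generalized HNN extension of $H\times H$ with stable letters $t_i$ ($i\in I$) and relations $(k,fk)=t_i(f^{-1},fk)t_i^{-1}$ for all $f\in F_i$, $k\in C_i$ (identifying $(1\times F_i)\cdot\Delta_{C_i}\cong\Delta'_{F_i}\cdot(1\times C_i)$ via $(k,fk)\mapsto(f^{-1},fk)$). $H$ is included in $A_1(H)$ via $h\mapsto(h,1)$. *)

theory Defs
  imports "HOL-Algebra.Algebra"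
begin

definition centralizer_set :: "('a, 'b) monoid_scheme \<Rightarrow> 'a set \<Rightarrow> 'a set" where
  "centralizer_set H F = {k \<in> carrier H. \<forall>f\<in>F. k \<otimes>\<^bsub>H\<^esub> f = f \<otimes>\<^bsub>H\<^esub> k}"

text \<open>The index set I: all finitely generated abelian subgroups of H
  (the subgroup itself serves as the index of its stable letter).\<close>
definition fg_abelian_subgroups :: "('a, 'b) monoid_scheme \<Rightarrow> 'a set set" where
  "fg_abelian_subgroups H =
     {F. subgroup F H \<and> (\<exists>S. finite S \<and> S \<subseteq> carrier H \<and> F = generate H S)
         \<and> (\<forall>x\<in>F. \<forall>y\<in>F. x \<otimes>\<^bsub>H\<^esub> y = y \<otimes>\<^bsub>H\<^esub> x)}"

text \<open>Letters of the presentation of A_1(H): elements of H x H, and the stable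
  letters t_F (True) and their inverses t_F^{-1} (False).\<close>
datatype 'a A1_letter = Gen "'a \<times> 'a" | Stable "'a set" bool

definition A1_wf_letter :: "('a, 'b) monoid_scheme \<Rightarrow> 'a A1_letter \<Rightarrow> bool" where
  "A1_wf_letter H l = (case l of
      Gen (a, b) \<Rightarrow> a \<in> carrier H \<and> b \<in> carrier H
    | Stable F _ \<Rightarrow> F \<in> fg_abelian_subgroups H)"

definition A1_wf_word :: "('a, 'b) monoid_scheme \<Rightarrow> 'a A1_letter list \<Rightarrow> bool" where
  "A1_wf_word H w = (\<forall>l\<in>set w. A1_wf_letter H l)"

text \<open>The congruence on words defining A_1(H) = (free monoid on the letters) / congruence:
  multiplication table of H x H, inverse relations for the stable letters, and the HNN
  relations (k, f k) = t_F (f^{-1}, f k) t_F^{-1} for f in F, k in C_H(F).\<close>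
inductive A1_eq :: "('a, 'b) monoid_scheme \<Rightarrow> 'a A1_letter list \<Rightarrow> 'a A1_letter list \<Rightarrow> bool"
  for H where
  refl: "A1_eq H w w"
| sym: "A1_eq H u w \<Longrightarrow> A1_eq H w u"
| trans: "A1_eq H u v \<Longrightarrow> A1_eq H v w \<Longrightarrow> A1_eq H u w"
| cong: "A1_eq H u w \<Longrightarrow> A1_eq H (x @ u @ y) (x @ w @ y)"
| unit: "A1_eq H [Gen (\<one>\<^bsub>H\<^esub>, \<one>\<^bsub>H\<^esub>)] []"
| mult: "\<lbrakk>a \<in> carrier H; b \<in> carrier H; c \<in> carrier H; d \<in> carrier H\<rbrakk> \<Longrightarrow>
     A1_eq H [Gen (a, b), Gen (c, d)] [Gen (a \<otimes>\<^bsub>H\<^esub> c, b \<otimes>\<^bsub>H\<^esub> d)]"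
| stable_inv: "F \<in> fg_abelian_subgroups H \<Longrightarrow> A1_eq H [Stable F e, Stable F (\<not> e)] []"
| hnn: "\<lbrakk>F \<in> fg_abelian_subgroups H; f \<in> F; k \<in> centralizer_set H F\<rbrakk> \<Longrightarrow>
     A1_eq H [Gen (k, f \<otimes>\<^bsub>H\<^esub> k)]
             [Stable F True, Gen (inv\<^bsub>H\<^esub> f, f \<otimes>\<^bsub>H\<^esub> k), Stable F False]"

definition A1_incl :: "('a, 'b) monoid_scheme \<Rightarrow> 'a \<Rightarrow> 'a A1_letter list" where
  "A1_incl H h = [Gen (h, \<one>\<^bsub>H\<^esub>)]"

text \<open>Conjugacy in A_1(H): there is an element x (class of w) with inverse (class of w')
  such that x g x^{-1} = h.\<close>
definition A1_conjugate :: "('a, 'b) monoid_scheme \<Rightarrow> 'a A1_letter list \<Rightarrow> 'a A1_letter list \<Rightarrow> bool" where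
  "A1_conjugate H u v = (\<exists>w w'. A1_wf_word H w \<and> A1_wf_word H w' \<and>
      A1_eq H (w @ w') [] \<and> A1_eq H (w @ u @ w') v)"

end

theory Submission
  imports Defs
begin


locale hnn = group G for G (structure) +
  fixes valid :: "'i \<Rightarrow> bool" and rv :: "'i \<Rightarrow> 'i"
    and S :: "'i \<Rightarrow> 'a set" and phi :: "'i \<Rightarrow> 'a \<Rightarrow> 'a"
  assumes valid_rv: "valid i \<Longrightarrow> valid (rv i)"
    and rv_rv: "rv (rv i) = i"
    and S_sub: "valid i \<Longrightarrow> subgroup (S i) G"
    and phi_mem: "valid i \<Longrightarrow> a \<in> S i \<Longrightarrow> phi i a \<in> S (rv i)"
    and phi_inv: "valid i \<Longrightarrow> a \<in> S i \<Longrightarrow> phi (rv i) (phi i a) = a"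
    and phi_mult: "valid i \<Longrightarrow> a \<in> S i \<Longrightarrow> a' \<in> S i \<Longrightarrow> phi i (a \<otimes> a') = phi i a \<otimes> phi i a'"
begin

lemma cancel_simps [simp]:
  "x \<in> carrier G \<Longrightarrow> y \<in> carrier G \<Longrightarrow> x \<otimes> (inv x \<otimes> y) = y"
  "x \<in> carrier G \<Longrightarrow> y \<in> carrier G \<Longrightarrow> inv x \<otimes> (x \<otimes> y) = y"
  by (simp_all add: m_assoc[symmetric])

definition rep :: "'i \<Rightarrow> 'a \<Rightarrow> 'a" where
  "rep i d = (if d \<in> S i then \<one> else (SOME c. c \<in> {d \<otimes> s |s. s \<in> S i}))"

lemma S_carr: "valid i \<Longrightarrow> a \<in> S i \<Longrightarrow> a \<in> carrier G"
  using S_sub subgroup.subset by blast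

lemma phi_carr: "valid i \<Longrightarrow> a \<in> S i \<Longrightarrow> phi i a \<in> carrier G"
  using phi_mem S_carr valid_rv by blast

lemma phi_one: "valid i \<Longrightarrow> phi i \<one> = \<one>"
proof -
  assume v: "valid i"
  have o: "\<one> \<in> S i" using S_sub[OF v] subgroup.one_closed by blast
  have "phi i \<one> = phi i \<one> \<otimes> phi i \<one>" using phi_mult[OF v o o] by simp
  then show ?thesis using phi_carr[OF v o]
    by (metis l_cancel_one' one_closed r_one)
qed

lemma rep_props:
  assumes v: "valid i" and d: "d \<in> carrier G"
  shows "rep i d \<in> carrier G \<and> inv (rep i d) \<otimes> d \<in> S i"
proof (cases "d \<in> S i")
  case True then show ?thesis using d by (simp add: rep_def)
next
  case False
  have "d \<in> {d \<otimes> s |s. s \<in> S i}"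
    using S_sub[OF v] subgroup.one_closed d by force
  then have "(SOME c. c \<in> {d \<otimes> s |s. s \<in> S i}) \<in> {d \<otimes> s |s. s \<in> S i}"
    by (rule someI)
  then obtain s where s: "s \<in> S i" and e: "rep i d = d \<otimes> s"
    using False by (auto simp: rep_def)
  have sc: "s \<in> carrier G" using S_carr[OF v s] .
  have "inv (rep i d) \<otimes> d = inv s"
    using e d sc by (simp add: inv_mult_group m_assoc)
  then show ?thesis using e d sc s S_sub[OF v] subgroup.m_inv_closed by fastforce
qed

lemma rep_mult:
  assumes v: "valid i" and d: "d \<in> carrier G" and s: "s \<in> S i"
  shows "rep i (d \<otimes> s) = rep i d"
proof -
  have sc: "s \<in> carrier G" using S_carr[OF v s] .
  have sub: "subgroup (S i) G" using S_sub[OF v] .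
  have mem: "d \<otimes> s \<in> S i \<longleftrightarrow> d \<in> S i"
  proof
    assume "d \<otimes> s \<in> S i"
    then have "d \<otimes> s \<otimes> inv s \<in> S i" by (rule subgroup.m_closed[OF sub _ subgroup.m_inv_closed[OF sub s]])
    then show "d \<in> S i" using d sc by (simp add: m_assoc r_inv)
  next
    assume "d \<in> S i" then show "d \<otimes> s \<in> S i" by (rule subgroup.m_closed[OF sub _ s])
  qed
  have "{d \<otimes> s \<otimes> t |t. t \<in> S i} = {d \<otimes> t |t. t \<in> S i}"
  proof (rule equalityI; rule subsetI)
    fix z assume "z \<in> {d \<otimes> s \<otimes> t |t. t \<in> S i}"
    then obtain t where t: "t \<in> S i" and z: "z = d \<otimes> s \<otimes> t" by auto
    have "s \<otimes> t \<in> S i" by (rule subgroup.m_closed[OF sub s t])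
    moreover have "z = d \<otimes> (s \<otimes> t)" using z d sc S_carr[OF v t] by (simp add: m_assoc)
    ultimately show "z \<in> {d \<otimes> t |t. t \<in> S i}" by auto
  next
    fix z assume "z \<in> {d \<otimes> t |t. t \<in> S i}"
    then obtain t where t: "t \<in> S i" and z: "z = d \<otimes> t" by auto
    have tc: "t \<in> carrier G" using S_carr[OF v t] .
    have "z = d \<otimes> s \<otimes> (inv s \<otimes> t)"
      using z d sc tc by (simp add: m_assoc)
    moreover have "inv s \<otimes> t \<in> S i" by (rule subgroup.m_closed[OF sub subgroup.m_inv_closed[OF sub s] t])
    ultimately show "z \<in> {d \<otimes> s \<otimes> t |t. t \<in> S i}" by auto
  qed
  then show ?thesis using mem by (simp add: rep_def)
qed

lemma rep_one_iff:
  assumes v: "valid i" and d: "d \<in> carrier G"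
  shows "rep i d = \<one> \<longleftrightarrow> d \<in> S i"
proof
  assume r: "rep i d = \<one>"
  have "inv (rep i d) \<otimes> d \<in> S i" using rep_props[OF v d] by blast
  then show "d \<in> S i" using r d by simp
qed (simp add: rep_def)

lemma rep_rep:
  assumes v: "valid i" and d: "d \<in> carrier G"
  shows "rep i (rep i d) = rep i d"
proof -
  obtain a where a: "a \<in> S i" "a = inv (rep i d) \<otimes> d" and rc: "rep i d \<in> carrier G"
    using rep_props[OF v d] by blast
  have "rep i d \<otimes> a = d" using a rc d by (simp add: m_assoc[symmetric])
  then have "rep i (rep i d \<otimes> a) = rep i d" by simp
  then show ?thesis using rep_mult[OF v rc a(1)] by simp
qed

fun ba :: "'a \<Rightarrow> ('a \<times> 'i) list \<Rightarrow> 'a \<Rightarrow> ('a \<times> 'i) list \<times> 'a" where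
  "ba x [] b = ([], x \<otimes> b)"
| "ba x ((c, i) # r) b =
    (let c' = rep i (x \<otimes> c) in
     (case ba (phi i (inv c' \<otimes> (x \<otimes> c))) r b of (r', b') \<Rightarrow> ((c', i) # r', b')))"

fun st :: "'i \<Rightarrow> ('a \<times> 'i) list \<Rightarrow> 'a \<Rightarrow> ('a \<times> 'i) list \<times> 'a" where
  "st j [] b = ([(\<one>, j)], b)"
| "st j ((c, i) # r) b = (if c = \<one> \<and> i = rv j then (r, b) else ((\<one>, j) # (c, i) # r, b))"

fun nfl :: "('a \<times> 'i) list \<Rightarrow> bool" where
  "nfl [] = True"
| "nfl ((c, i) # r) = (valid i \<and> c \<in> carrier G \<and> rep i c = c \<and> nfl r \<and>
      (case r of [] \<Rightarrow> True | (c2, i2) # _ \<Rightarrow> \<not> (c2 = \<one> \<and> i2 = rv i)))"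


lemma ba_Cons: "ba x ((c, i) # r) b =
  ((rep i (x \<otimes> c), i) # fst (ba (phi i (inv (rep i (x \<otimes> c)) \<otimes> (x \<otimes> c))) r b),
   snd (ba (phi i (inv (rep i (x \<otimes> c)) \<otimes> (x \<otimes> c))) r b))"
  by (simp add: Let_def split: prod.split)

declare ba.simps(2) [simp del]

lemma S_mult_iff:
  assumes v: "valid j" and y: "y \<in> S j" and c: "c \<in> carrier G"
  shows "y \<otimes> c \<in> S j \<longleftrightarrow> c \<in> S j"
proof
  have sub: "subgroup (S j) G" using S_sub[OF v] .
  have yc: "y \<in> carrier G" using S_carr[OF v y] .
  assume "y \<otimes> c \<in> S j"
  then have "inv y \<otimes> (y \<otimes> c) \<in> S j" by (rule subgroup.m_closed[OF sub subgroup.m_inv_closed[OF sub y]])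
  then show "c \<in> S j" using yc c by simp
next
  have sub: "subgroup (S j) G" using S_sub[OF v] .
  assume "c \<in> S j" then show "y \<otimes> c \<in> S j" by (rule subgroup.m_closed[OF sub y])
qed

lemma a_in_S:
  assumes v: "valid i" and d: "d \<in> carrier G"
  shows "inv (rep i d) \<otimes> d \<in> S i" "rep i d \<in> carrier G"
  using rep_props[OF v d] by auto

lemma ba_pres:
  assumes "nfl L" "x \<in> carrier G" "b \<in> carrier G"
  shows "nfl (fst (ba x L b)) \<and> snd (ba x L b) \<in> carrier G \<and> map snd (fst (ba x L b)) = map snd L"
  using assms
proof (induction L arbitrary: x)
  case Nil
  then show ?case by simp
next
  case (Cons ci r)
  obtain c i where ci: "ci = (c, i)" by fastforce
  have v: "valid i" and cc: "c \<in> carrier G" and rc: "rep i c = c" and nr: "nfl r"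
    and red: "(case r of [] \<Rightarrow> True | (c2, i2) # _ \<Rightarrow> \<not> (c2 = \<one> \<and> i2 = rv i))"
    using Cons.prems(1) ci by auto
  define d where "d = x \<otimes> c"
  have dc: "d \<in> carrier G" using d_def Cons.prems cc by simp
  define y where "y = phi i (inv (rep i d) \<otimes> d)"
  have yS: "y \<in> S (rv i)" using y_def phi_mem[OF v a_in_S(1)[OF v dc]] by simp
  have yc: "y \<in> carrier G" using S_carr[OF valid_rv[OF v] yS] .
  have IH: "nfl (fst (ba y r b)) \<and> snd (ba y r b) \<in> carrier G \<and> map snd (fst (ba y r b)) = map snd r"
    using Cons.IH[OF nr yc Cons.prems(3)] .
  have e: "ba x (ci # r) b = ((rep i d, i) # fst (ba y r b), snd (ba y r b))"
    using ci ba_Cons d_def y_def by simp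
  have red': "(case fst (ba y r b) of [] \<Rightarrow> True | (c2, i2) # _ \<Rightarrow> \<not> (c2 = \<one> \<and> i2 = rv i))"
  proof (cases r)
    case Nil then show ?thesis by simp
  next
    case (Cons ci2 r2)
    obtain c2 i2 where ci2: "ci2 = (c2, i2)" by fastforce
    have v2: "valid i2" and c2c: "c2 \<in> carrier G" and rc2: "rep i2 c2 = c2"
      using nr Cons ci2 by auto
    have e2: "fst (ba y r b) = (rep i2 (y \<otimes> c2), i2) # fst (ba (phi i2 (inv (rep i2 (y \<otimes> c2)) \<otimes> (y \<otimes> c2))) r2 b)"
      using Cons ci2 ba_Cons by simp
    have "\<not> (rep i2 (y \<otimes> c2) = \<one> \<and> i2 = rv i)"
    proof
      assume h: "rep i2 (y \<otimes> c2) = \<one> \<and> i2 = rv i"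
      then have "y \<otimes> c2 \<in> S i2" using rep_one_iff[OF v2, of "y \<otimes> c2"] h[THEN conjunct1] yc c2c by simp
      then have "c2 \<in> S i2" using S_mult_iff[OF v2 _ c2c] yS h by simp
      then have "c2 = \<one>" using rep_one_iff[OF v2 c2c] rc2 by simp
      then show False using red Cons ci2 h by simp
    qed
    then show ?thesis using e2 by simp
  qed
  have "rep i (rep i d) = rep i d" using rep_rep[OF v dc] .
  then show ?case using e IH red' v a_in_S(2)[OF v dc] ci by (cases "fst (ba y r b)") auto
qed

lemma ba_one:
  assumes "nfl L" "b \<in> carrier G"
  shows "ba \<one> L b = (L, b)"
  using assms
proof (induction L)
  case Nil then show ?case by simp
next
  case (Cons ci r)
  obtain c i where ci: "ci = (c, i)" by fastforce
  have v: "valid i" and cc: "c \<in> carrier G" and rc: "rep i c = c" and nr: "nfl r"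
    using Cons.prems(1) ci by auto
  show ?case using ci ba_Cons[of \<one> c i r b] rc cc Cons.IH[OF nr Cons.prems(2)] phi_one[OF v] by simp
qed

lemma ba_R:
  assumes "nfl L" "x \<in> carrier G" "b \<in> carrier G" "z \<in> carrier G"
  shows "ba x L (b \<otimes> z) = (fst (ba x L b), snd (ba x L b) \<otimes> z)"
  using assms
proof (induction L arbitrary: x)
  case Nil then show ?case by (simp add: m_assoc)
next
  case (Cons ci r)
  obtain c i where ci: "ci = (c, i)" by fastforce
  have v: "valid i" and cc: "c \<in> carrier G" and nr: "nfl r"
    using Cons.prems(1) ci by auto
  define d where "d = x \<otimes> c"
  have dc: "d \<in> carrier G" using d_def Cons.prems cc by simp
  define y where "y = phi i (inv (rep i d) \<otimes> d)"
  have yc: "y \<in> carrier G" using y_def phi_carr[OF v a_in_S(1)[OF v dc]] by simp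
  show ?case using ci ba_Cons[of x c i r] d_def y_def Cons.IH[OF nr yc Cons.prems(3,4)] by simp
qed

lemma ba_mult:
  assumes "nfl L" "x \<in> carrier G" "y \<in> carrier G" "b \<in> carrier G"
  shows "ba x (fst (ba y L b)) (snd (ba y L b)) = ba (x \<otimes> y) L b"
  using assms
proof (induction L arbitrary: x y)
  case Nil then show ?case by (simp add: m_assoc)
next
  case (Cons ci r)
  obtain c i where ci: "ci = (c, i)" by fastforce
  have v: "valid i" and cc: "c \<in> carrier G" and nr: "nfl r"
    using Cons.prems(1) ci by auto
  define d1 where "d1 = y \<otimes> c"
  have d1c: "d1 \<in> carrier G" using d1_def Cons.prems cc by simp
  define c1 where "c1 = rep i d1"
  define a1 where "a1 = inv c1 \<otimes> d1"
  have a1S: "a1 \<in> S i" and c1c: "c1 \<in> carrier G" using a_in_S[OF v d1c] a1_def c1_def by auto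
  have a1c: "a1 \<in> carrier G" using S_carr[OF v a1S] .
  define d2 where "d2 = x \<otimes> c1"
  have d2c: "d2 \<in> carrier G" using d2_def Cons.prems c1c by simp
  define c2 where "c2 = rep i d2"
  define a2 where "a2 = inv c2 \<otimes> d2"
  have a2S: "a2 \<in> S i" and c2c: "c2 \<in> carrier G" using a_in_S[OF v d2c] a2_def c2_def by auto
  have a2c: "a2 \<in> carrier G" using S_carr[OF v a2S] .
  have p1: "phi i a1 \<in> carrier G" "phi i a2 \<in> carrier G" using phi_carr[OF v] a1S a2S by auto
  have e1: "ba y (ci # r) b = ((c1, i) # fst (ba (phi i a1) r b), snd (ba (phi i a1) r b))"
    using ci ba_Cons[of y c i r b] c1_def a1_def d1_def by simp
  have e2: "ba x ((c1, i) # fst (ba (phi i a1) r b)) (snd (ba (phi i a1) r b)) =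
     ((c2, i) # fst (ba (phi i a2 \<otimes> phi i a1) r b), snd (ba (phi i a2 \<otimes> phi i a1) r b))"
    using ba_Cons[of x c1 i] c2_def a2_def d2_def Cons.IH[OF nr p1(2) p1(1) Cons.prems(4)] by simp
  have c1a1: "c1 \<otimes> a1 = d1" using a1_def c1c d1c by simp
  have xyc: "x \<otimes> y \<otimes> c = d2 \<otimes> a1"
    using c1a1 d1_def d2_def Cons.prems cc c1c a1c by (simp add: m_assoc)
  have r3: "rep i (x \<otimes> y \<otimes> c) = c2" using xyc rep_mult[OF v d2c a1S] c2_def by simp
  have a3: "inv c2 \<otimes> (x \<otimes> y \<otimes> c) = a2 \<otimes> a1" using xyc a2_def c2c d2c a1c by (simp add: m_assoc)
  have e3: "ba (x \<otimes> y) (ci # r) b =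
     ((c2, i) # fst (ba (phi i (a2 \<otimes> a1)) r b), snd (ba (phi i (a2 \<otimes> a1)) r b))"
    using ci ba_Cons[of "x \<otimes> y" c i r b] r3 a3 by simp
  show ?case using e1 e2 e3 phi_mult[OF v a2S a1S] by simp
qed

lemma st_pres:
  assumes "valid j" "nfl L"
  shows "nfl (fst (st j L b)) \<and> snd (st j L b) = b"
proof (cases L)
  case Nil then show ?thesis using assms by (simp add: rep_def S_sub subgroup.one_closed)
next
  case (Cons ci r)
  obtain c i where ci: "ci = (c, i)" by fastforce
  have "\<one> \<in> S j" using S_sub[OF assms(1)] subgroup.one_closed by auto
  then show ?thesis using assms Cons ci by (auto simp: rep_def)
qed

lemma st_inv:
  assumes "valid j" "nfl L"
  shows "st j (fst (st (rv j) L b)) (snd (st (rv j) L b)) = (L, b)"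
proof (cases L)
  case Nil then show ?thesis by simp
next
  case (Cons ci r)
  obtain c i where ci: "ci = (c, i)" by fastforce
  show ?thesis
  proof (cases "c = \<one> \<and> i = j")
    case True
    then show ?thesis using assms Cons ci rv_rv by (cases r) auto
  next
    case False
    then show ?thesis using Cons ci rv_rv by auto
  qed
qed

lemma hnn_rel:
  assumes v: "valid j" and a: "a \<in> S j" and L: "nfl L" and b: "b \<in> carrier G"
  shows "ba a L b = st j (fst (ba (phi j a) (fst (st (rv j) L b)) (snd (st (rv j) L b))))
                         (snd (ba (phi j a) (fst (st (rv j) L b)) (snd (st (rv j) L b))))"
proof -
  have ac: "a \<in> carrier G" using S_carr[OF v a] .
  have vr: "valid (rv j)" using valid_rv[OF v] .
  have pS: "phi j a \<in> S (rv j)" using phi_mem[OF v a] .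
  have pc: "phi j a \<in> carrier G" using S_carr[OF vr pS] .
  show ?thesis
  proof (cases "\<exists>r. L = (\<one>, j) # r")
    case True
    then obtain r where Lr: "L = (\<one>, j) # r" by blast
    have nr: "nfl r" using L Lr by simp
    have red: "(case r of [] \<Rightarrow> True | (c2, i2) # _ \<Rightarrow> \<not> (c2 = \<one> \<and> i2 = rv j))"
      using L Lr by simp
    have s1: "st (rv j) L b = (r, b)" using Lr rv_rv by simp
    have lhs: "ba a L b = ((\<one>, j) # fst (ba (phi j a) r b), snd (ba (phi j a) r b))"
      using Lr ba_Cons[of a \<one> j r b] ac rep_one_iff[OF v ac] a by simp
    have "st j (fst (ba (phi j a) r b)) (snd (ba (phi j a) r b)) =
          ((\<one>, j) # fst (ba (phi j a) r b), snd (ba (phi j a) r b))"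
    proof (cases r)
      case Nil then show ?thesis by simp
    next
      case (Cons ci2 r2)
      obtain c2 i2 where ci2: "ci2 = (c2, i2)" by fastforce
      have v2: "valid i2" and c2c: "c2 \<in> carrier G" and rc2: "rep i2 c2 = c2"
        using nr Cons ci2 by auto
      have e2: "fst (ba (phi j a) r b) = (rep i2 (phi j a \<otimes> c2), i2) # fst (ba (phi i2 (inv (rep i2 (phi j a \<otimes> c2)) \<otimes> (phi j a \<otimes> c2))) r2 b)"
        using Cons ci2 ba_Cons by simp
      have "\<not> (rep i2 (phi j a \<otimes> c2) = \<one> \<and> i2 = rv j)"
      proof
        assume h: "rep i2 (phi j a \<otimes> c2) = \<one> \<and> i2 = rv j"
        then have "phi j a \<otimes> c2 \<in> S i2" using rep_one_iff[OF v2, of "phi j a \<otimes> c2"] h[THEN conjunct1] pc c2c by simp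
        then have "c2 \<in> S i2" using S_mult_iff[OF v2 _ c2c] pS h by simp
        then have "c2 = \<one>" using rep_one_iff[OF v2 c2c] rc2 by simp
        then show False using red Cons ci2 h by simp
      qed
      then show ?thesis using e2 by (cases "fst (ba (phi j a) r b)") auto
    qed
    then show ?thesis using lhs s1 by simp
  next
    case False
    note nF = False
    have s1: "st (rv j) L b = ((\<one>, rv j) # L, b)"
    proof (cases L)
      case (Cons ci r)
      obtain c i where ci: "ci = (c, i)" by fastforce
      have "\<not> (c = \<one> \<and> i = j)" using nF Cons ci by blast
      then show ?thesis using Cons ci rv_rv by simp
    qed simp
    have pinv: "phi (rv j) (phi j a) = a" using phi_inv[OF v a] .
    have m: "ba (phi j a) ((\<one>, rv j) # L) b = ((\<one>, rv j) # fst (ba a L b), snd (ba a L b))"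
      using ba_Cons[of "phi j a" \<one> "rv j" L b] pc rep_one_iff[OF vr pc] pS pinv by simp
    show ?thesis using s1 m rv_rv by simp
  qed
qed

lemma fixed_point:
  assumes Qconj: "\<And>z c. Q z \<Longrightarrow> z \<in> carrier G \<Longrightarrow> c \<in> carrier G \<Longrightarrow> Q (inv c \<otimes> z \<otimes> c)"
    and Qphi: "\<And>z i. Q z \<Longrightarrow> valid i \<Longrightarrow> z \<in> S i \<Longrightarrow> Q (phi i z)"
  shows "nfl L \<Longrightarrow> x \<in> carrier G \<Longrightarrow> b \<in> carrier G \<Longrightarrow> y \<in> carrier G \<Longrightarrow> Q x \<Longrightarrow>
    ba x L b = (L, b \<otimes> y) \<Longrightarrow> \<exists>x'. Q x' \<and> x' \<in> carrier G \<and> x' \<otimes> b = b \<otimes> y"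
proof (induction L arbitrary: x)
  case Nil then show ?case by auto
next
  case (Cons ci r)
  obtain c i where ci: "ci = (c, i)" by fastforce
  have v: "valid i" and cc: "c \<in> carrier G" and nr: "nfl r"
    using Cons.prems(1) ci by auto
  define d where "d = x \<otimes> c"
  have dc: "d \<in> carrier G" using d_def Cons.prems cc by simp
  have e: "ba x (ci # r) b = ((rep i d, i) # fst (ba (phi i (inv (rep i d) \<otimes> d)) r b), snd (ba (phi i (inv (rep i d) \<otimes> d)) r b))"
    using ci ba_Cons d_def by simp
  have rd: "rep i d = c" using e Cons.prems(6) ci by simp
  have aS: "inv c \<otimes> d \<in> S i" using a_in_S(1)[OF v dc] rd by simp
  have Qa: "Q (inv c \<otimes> d)" using Qconj[OF Cons.prems(5) Cons.prems(2) cc] d_def Cons.prems(2) cc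
    by (simp add: m_assoc)
  have Qp: "Q (phi i (inv c \<otimes> d))" using Qphi[OF Qa v aS] .
  have pc: "phi i (inv c \<otimes> d) \<in> carrier G" using phi_carr[OF v aS] .
  have "ba (phi i (inv c \<otimes> d)) r b = (r, b \<otimes> y)" using e Cons.prems(6) ci rd
    by (metis (no_types, lifting) list.inject prod.collapse prod.inject)
  then show ?case using Cons.IH[OF nr pc Cons.prems(3,4) Qp] by blast
qed

end


locale A1ctx = group H for H (structure)
begin

lemma csimps [simp]:
  "x \<in> carrier H \<Longrightarrow> y \<in> carrier H \<Longrightarrow> x \<otimes> (inv x \<otimes> y) = y"
  "x \<in> carrier H \<Longrightarrow> y \<in> carrier H \<Longrightarrow> inv x \<otimes> (x \<otimes> y) = y"
  by (simp_all add: m_assoc[symmetric])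

lemma comm_inv:
  assumes x: "x \<in> carrier H" and y: "y \<in> carrier H" and c: "x \<otimes> y = y \<otimes> x"
  shows "inv x \<otimes> y = y \<otimes> inv x"
proof -
  have "inv x \<otimes> y = inv x \<otimes> (y \<otimes> x) \<otimes> inv x" using x y by (simp add: m_assoc)
  also have "\<dots> = inv x \<otimes> (x \<otimes> y) \<otimes> inv x" using c by simp
  also have "\<dots> = y \<otimes> inv x" using x y by (simp add: m_assoc)
  finally show ?thesis .
qed

definition vld :: "'a set \<times> bool \<Rightarrow> bool" where
  "vld i = (fst i \<in> fg_abelian_subgroups H)"

definition rvi :: "'a set \<times> bool \<Rightarrow> 'a set \<times> bool" where
  "rvi i = (fst i, \<not> snd i)"

definition SS :: "'a set \<times> bool \<Rightarrow> ('a \<times> 'a) set" where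
  "SS i = (if snd i then {(k, f \<otimes> k) |f k. f \<in> fst i \<and> k \<in> centralizer_set H (fst i)}
           else {(inv f, f \<otimes> k) |f k. f \<in> fst i \<and> k \<in> centralizer_set H (fst i)})"

definition ph :: "'a set \<times> bool \<Rightarrow> 'a \<times> 'a \<Rightarrow> 'a \<times> 'a" where
  "ph i z = (if snd i then (fst z \<otimes> inv (snd z), snd z) else (fst z \<otimes> snd z, snd z))"

lemma fg_facts:
  assumes "F \<in> fg_abelian_subgroups H"
  shows "subgroup F H" "\<And>x y. x \<in> F \<Longrightarrow> y \<in> F \<Longrightarrow> x \<otimes> y = y \<otimes> x"
  using assms unfolding fg_abelian_subgroups_def by auto

lemma cent_facts:
  assumes F: "F \<in> fg_abelian_subgroups H"
  shows "\<And>k. k \<in> centralizer_set H F \<Longrightarrow> k \<in> carrier H"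
    and "\<And>k f. k \<in> centralizer_set H F \<Longrightarrow> f \<in> F \<Longrightarrow> k \<otimes> f = f \<otimes> k"
    and "\<And>f. f \<in> F \<Longrightarrow> f \<in> carrier H"
    and "\<And>k. k \<in> centralizer_set H F \<Longrightarrow> inv k \<in> centralizer_set H F"
    and "\<And>k k'. k \<in> centralizer_set H F \<Longrightarrow> k' \<in> centralizer_set H F \<Longrightarrow> k \<otimes> k' \<in> centralizer_set H F"
    and "\<And>f. f \<in> F \<Longrightarrow> inv f \<in> F"
    and "\<And>f f'. f \<in> F \<Longrightarrow> f' \<in> F \<Longrightarrow> f \<otimes> f' \<in> F"
    and "\<one> \<in> F" "\<one> \<in> centralizer_set H F"
proof -
  have sub: "subgroup F H" using fg_facts[OF F] by simp
  show fc: "\<And>f. f \<in> F \<Longrightarrow> f \<in> carrier H" using subgroup.subset[OF sub] by blast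
  show "\<And>k. k \<in> centralizer_set H F \<Longrightarrow> k \<in> carrier H"
    "\<And>k f. k \<in> centralizer_set H F \<Longrightarrow> f \<in> F \<Longrightarrow> k \<otimes> f = f \<otimes> k"
    by (auto simp: centralizer_set_def)
  show "\<And>f. f \<in> F \<Longrightarrow> inv f \<in> F" by (rule subgroup.m_inv_closed[OF sub])
  show "\<And>f f'. f \<in> F \<Longrightarrow> f' \<in> F \<Longrightarrow> f \<otimes> f' \<in> F" by (rule subgroup.m_closed[OF sub])
  show "\<one> \<in> F" by (rule subgroup.one_closed[OF sub])
  show "\<one> \<in> centralizer_set H F" using fc by (auto simp: centralizer_set_def)
  show "\<And>k. k \<in> centralizer_set H F \<Longrightarrow> inv k \<in> centralizer_set H F"
    using comm_inv fc by (auto simp: centralizer_set_def)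
  show "\<And>k k'. k \<in> centralizer_set H F \<Longrightarrow> k' \<in> centralizer_set H F \<Longrightarrow> k \<otimes> k' \<in> centralizer_set H F"
  proof -
    fix k k' assume k: "k \<in> centralizer_set H F" and k': "k' \<in> centralizer_set H F"
    have kc: "k \<in> carrier H" "k' \<in> carrier H" using k k' by (auto simp: centralizer_set_def)
    have "\<forall>f\<in>F. k \<otimes> k' \<otimes> f = f \<otimes> (k \<otimes> k')"
    proof
      fix f assume f: "f \<in> F"
      have fcc: "f \<in> carrier H" using fc f .
      have "k \<otimes> k' \<otimes> f = k \<otimes> (f \<otimes> k')" using k' f kc fcc by (simp add: m_assoc centralizer_set_def)
      also have "\<dots> = (k \<otimes> f) \<otimes> k'" using kc fcc by (simp add: m_assoc)
      also have "\<dots> = f \<otimes> (k \<otimes> k')" using k f kc fcc by (simp add: m_assoc centralizer_set_def)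
      finally show "k \<otimes> k' \<otimes> f = f \<otimes> (k \<otimes> k')" .
    qed
    then show "k \<otimes> k' \<in> centralizer_set H F" using kc by (simp add: centralizer_set_def)
  qed
qed


lemma prod_lem:
  assumes F: "F \<in> fg_abelian_subgroups H" and f: "f \<in> F" "f' \<in> F"
    and k: "k \<in> centralizer_set H F" "k' \<in> centralizer_set H F"
  shows "f \<otimes> k \<otimes> (f' \<otimes> k') = f \<otimes> f' \<otimes> (k \<otimes> k')"
    and "inv f \<otimes> inv f' = inv (f \<otimes> f')"
    and "inv k \<otimes> inv f = inv f \<otimes> inv k"
    and "inv (f \<otimes> k) = inv f \<otimes> inv k"
proof -
  note cf = cent_facts[OF F]
  have c: "f \<in> carrier H" "f' \<in> carrier H" "k \<in> carrier H" "k' \<in> carrier H"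
    using cf f k by auto
  have kf': "k \<otimes> f' = f' \<otimes> k" using cf(2) k f by blast
  have "f \<otimes> k \<otimes> (f' \<otimes> k') = f \<otimes> ((k \<otimes> f') \<otimes> k')" using c by (simp add: m_assoc)
  also have "\<dots> = f \<otimes> f' \<otimes> (k \<otimes> k')" using kf' c by (simp add: m_assoc)
  finally show "f \<otimes> k \<otimes> (f' \<otimes> k') = f \<otimes> f' \<otimes> (k \<otimes> k')" .
  have "inv f' \<otimes> inv f = inv f \<otimes> inv f'" using fg_facts(2)[OF F] cf(6) f by blast
  then show "inv f \<otimes> inv f' = inv (f \<otimes> f')" using c by (simp add: inv_mult_group)
  show ik: "inv k \<otimes> inv f = inv f \<otimes> inv k" using cf(2,4,6) k f by blast
  show "inv (f \<otimes> k) = inv f \<otimes> inv k" using c ik by (simp add: inv_mult_group)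
qed

lemma ph_T: "f \<in> F \<Longrightarrow> F \<in> fg_abelian_subgroups H \<Longrightarrow> k \<in> centralizer_set H F \<Longrightarrow>
   ph (F, True) (k, f \<otimes> k) = (inv f, f \<otimes> k)"
  using cent_facts(1,3) by (simp add: ph_def inv_mult_group m_assoc)

lemma ph_F: "f \<in> F \<Longrightarrow> F \<in> fg_abelian_subgroups H \<Longrightarrow> k \<in> centralizer_set H F \<Longrightarrow>
   ph (F, False) (inv f, f \<otimes> k) = (k, f \<otimes> k)"
  using cent_facts(1,3) by (simp add: ph_def m_assoc[symmetric])

lemma memT: "f \<in> F \<Longrightarrow> k \<in> centralizer_set H F \<Longrightarrow> (k, f \<otimes> k) \<in> SS (F, True)"
  by (auto simp: SS_def)
lemma memF: "f \<in> F \<Longrightarrow> k \<in> centralizer_set H F \<Longrightarrow> (inv f, f \<otimes> k) \<in> SS (F, False)"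
  by (auto simp: SS_def)
lemma elimT: "z \<in> SS (F, True) \<Longrightarrow> \<exists>f k. f \<in> F \<and> k \<in> centralizer_set H F \<and> z = (k, f \<otimes> k)"
  by (auto simp: SS_def)
lemma elimF: "z \<in> SS (F, False) \<Longrightarrow> \<exists>f k. f \<in> F \<and> k \<in> centralizer_set H F \<and> z = (inv f, f \<otimes> k)"
  by (auto simp: SS_def)

lemma HH_group: "group (H \<times>\<times> H)" using DirProd_group[OF is_group is_group] .

lemma invHH: "x \<in> carrier H \<Longrightarrow> y \<in> carrier H \<Longrightarrow> inv\<^bsub>H \<times>\<times> H\<^esub> (x, y) = (inv x, inv y)"
  using inv_DirProd[OF is_group is_group] by blast

lemma SS_sub: assumes "vld i" shows "subgroup (SS i) (H \<times>\<times> H)"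
proof -
  obtain F e where i: "i = (F, e)" by fastforce
  have F: "F \<in> fg_abelian_subgroups H" using assms i by (simp add: vld_def)
  note cf = cent_facts[OF F]
  show ?thesis
  proof (cases e)
    case True
    show ?thesis
    proof (rule group.subgroupI[OF HH_group])
      show "SS i \<subseteq> carrier (H \<times>\<times> H)"
      proof
        fix z assume "z \<in> SS i"
        then obtain f k where fk: "f \<in> F" "k \<in> centralizer_set H F" "z = (k, f \<otimes> k)"
          using elimT[of z F] i True by auto
        have "f \<in> carrier H" "k \<in> carrier H" using cf(1,3) fk by auto
        then show "z \<in> carrier (H \<times>\<times> H)" using fk(3) by simp
      qed
      have "(\<one>, \<one> \<otimes> \<one>) \<in> SS i" using i True memT[OF cf(8) cf(9)] by simp
      then show "SS i \<noteq> {}" by (metis empty_iff)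
      fix a assume a: "a \<in> SS i"
      then obtain f k where fk: "f \<in> F" "k \<in> centralizer_set H F" "a = (k, f \<otimes> k)"
        using elimT[of a F] i True by auto
      have fc: "f \<in> carrier H" "k \<in> carrier H" using cf(1,3) fk by auto
      have "inv\<^bsub>H \<times>\<times> H\<^esub> a = (inv k, inv (f \<otimes> k))"
        using fk(3) invHH fc by simp
      also have "\<dots> = (inv k, inv f \<otimes> inv k)" 
        using prod_lem(3,4)[OF F fk(1) fk(1) fk(2) fk(2)] by simp
      finally have "inv\<^bsub>H \<times>\<times> H\<^esub> a = (inv k, inv f \<otimes> inv k)" .
      then show "inv\<^bsub>H \<times>\<times> H\<^esub> a \<in> SS i" using memT[OF cf(6)[OF fk(1)] cf(4)[OF fk(2)]] i True by simp
    next
      fix a b assume a: "a \<in> SS i" and b: "b \<in> SS i"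
      obtain f k where fk: "f \<in> F" "k \<in> centralizer_set H F" "a = (k, f \<otimes> k)"
        using elimT[of a F] i True a by auto
      obtain f' k' where fk': "f' \<in> F" "k' \<in> centralizer_set H F" "b = (k', f' \<otimes> k')"
        using elimT[of b F] i True b by auto
      have "a \<otimes>\<^bsub>H \<times>\<times> H\<^esub> b = (k \<otimes> k', f \<otimes> f' \<otimes> (k \<otimes> k'))"
        using fk fk' prod_lem(1)[OF F fk(1) fk'(1) fk(2) fk'(2)] by simp
      then show "a \<otimes>\<^bsub>H \<times>\<times> H\<^esub> b \<in> SS i"
        using memT[OF cf(7)[OF fk(1) fk'(1)] cf(5)[OF fk(2) fk'(2)]] i True by simp
    qed
  next
    case False
    show ?thesis
    proof (rule group.subgroupI[OF HH_group])
      show "SS i \<subseteq> carrier (H \<times>\<times> H)"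
      proof
        fix z assume "z \<in> SS i"
        then obtain f k where fk: "f \<in> F" "k \<in> centralizer_set H F" "z = (inv f, f \<otimes> k)"
          using elimF[of z F] i False by auto
        have "f \<in> carrier H" "k \<in> carrier H" using cf(1,3) fk by auto
        then show "z \<in> carrier (H \<times>\<times> H)" using fk(3) by simp
      qed
      have "(inv \<one>, \<one> \<otimes> \<one>) \<in> SS i" using i False memF[OF cf(8) cf(9)] by simp
      then show "SS i \<noteq> {}" by (metis empty_iff)
      fix a assume a: "a \<in> SS i"
      then obtain f k where fk: "f \<in> F" "k \<in> centralizer_set H F" "a = (inv f, f \<otimes> k)"
        using elimF[of a F] i False by auto
      have fc: "f \<in> carrier H" "k \<in> carrier H" using cf(1,3) fk by auto
      have "inv\<^bsub>H \<times>\<times> H\<^esub> a = (inv (inv f), inv (f \<otimes> k))"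
        using fk(3) invHH fc by simp
      also have "\<dots> = (inv (inv f), inv f \<otimes> inv k)"
        using prod_lem(3,4)[OF F fk(1) fk(1) fk(2) fk(2)] by simp
      finally have "inv\<^bsub>H \<times>\<times> H\<^esub> a = (inv (inv f), inv f \<otimes> inv k)" .
      then show "inv\<^bsub>H \<times>\<times> H\<^esub> a \<in> SS i" using memF[OF cf(6)[OF fk(1)] cf(4)[OF fk(2)]] i False by simp
    next
      fix a b assume a: "a \<in> SS i" and b: "b \<in> SS i"
      obtain f k where fk: "f \<in> F" "k \<in> centralizer_set H F" "a = (inv f, f \<otimes> k)"
        using elimF[of a F] i False a by auto
      obtain f' k' where fk': "f' \<in> F" "k' \<in> centralizer_set H F" "b = (inv f', f' \<otimes> k')"
        using elimF[of b F] i False b by auto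
      have "a \<otimes>\<^bsub>H \<times>\<times> H\<^esub> b = (inv (f \<otimes> f'), f \<otimes> f' \<otimes> (k \<otimes> k'))"
        using fk fk' prod_lem(1,2)[OF F fk(1) fk'(1) fk(2) fk'(2)] by simp
      then show "a \<otimes>\<^bsub>H \<times>\<times> H\<^esub> b \<in> SS i"
        using memF[OF cf(7)[OF fk(1) fk'(1)] cf(5)[OF fk(2) fk'(2)]] i False by simp
    qed
  qed
qed

lemma hnn_inst: "hnn (H \<times>\<times> H) vld rvi SS ph"
proof (intro hnn.intro hnn_axioms.intro HH_group)
  fix i show "vld i \<Longrightarrow> vld (rvi i)" by (simp add: vld_def rvi_def)
  show "rvi (rvi i) = i" by (simp add: rvi_def)
  show "vld i \<Longrightarrow> subgroup (SS i) (H \<times>\<times> H)" by (rule SS_sub)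
next
  fix i a assume v: "vld i" and a: "a \<in> SS i"
  obtain F e where i: "i = (F, e)" by fastforce
  have F: "F \<in> fg_abelian_subgroups H" using v i by (simp add: vld_def)
  note cf = cent_facts[OF F]
  show "ph i a \<in> SS (rvi i)"
  proof (cases e)
    case True
    then obtain f k where fk: "f \<in> F" "k \<in> centralizer_set H F" "a = (k, f \<otimes> k)"
      using elimT[of a F] i a by auto
    show ?thesis using ph_T[OF fk(1) F fk(2)] memF[OF fk(1,2)] fk(3) i True by (simp add: rvi_def)
  next
    case False
    then obtain f k where fk: "f \<in> F" "k \<in> centralizer_set H F" "a = (inv f, f \<otimes> k)"
      using elimF[of a F] i a by auto
    show ?thesis using ph_F[OF fk(1) F fk(2)] memT[OF fk(1,2)] fk(3) i False by (simp add: rvi_def)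
  qed
  show "ph (rvi i) (ph i a) = a"
  proof (cases e)
    case True
    then obtain f k where fk: "f \<in> F" "k \<in> centralizer_set H F" "a = (k, f \<otimes> k)"
      using elimT[of a F] i a by auto
    show ?thesis using ph_T[OF fk(1) F fk(2)] ph_F[OF fk(1) F fk(2)] fk(3) i True by (simp add: rvi_def)
  next
    case False
    then obtain f k where fk: "f \<in> F" "k \<in> centralizer_set H F" "a = (inv f, f \<otimes> k)"
      using elimF[of a F] i a by auto
    show ?thesis using ph_T[OF fk(1) F fk(2)] ph_F[OF fk(1) F fk(2)] fk(3) i False by (simp add: rvi_def)
  qed
  fix a' assume a': "a' \<in> SS i"
  show "ph i (a \<otimes>\<^bsub>H \<times>\<times> H\<^esub> a') = ph i a \<otimes>\<^bsub>H \<times>\<times> H\<^esub> ph i a'"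
  proof (cases e)
    case True
    obtain f k where fk: "f \<in> F" "k \<in> centralizer_set H F" "a = (k, f \<otimes> k)"
      using elimT[of a F] i a True by auto
    obtain f' k' where fk': "f' \<in> F" "k' \<in> centralizer_set H F" "a' = (k', f' \<otimes> k')"
      using elimT[of a' F] i a' True by auto
    have p: "a \<otimes>\<^bsub>H \<times>\<times> H\<^esub> a' = (k \<otimes> k', f \<otimes> f' \<otimes> (k \<otimes> k'))"
      using fk fk' prod_lem(1)[OF F fk(1) fk'(1) fk(2) fk'(2)] by simp
    show ?thesis using p ph_T[OF cf(7)[OF fk(1) fk'(1)] F cf(5)[OF fk(2) fk'(2)]]
        ph_T[OF fk(1) F fk(2)] ph_T[OF fk'(1) F fk'(2)] fk(3) fk'(3) i True
        prod_lem(1,2)[OF F fk(1) fk'(1) fk(2) fk'(2)] by simp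
  next
    case False
    obtain f k where fk: "f \<in> F" "k \<in> centralizer_set H F" "a = (inv f, f \<otimes> k)"
      using elimF[of a F] i a False by auto
    obtain f' k' where fk': "f' \<in> F" "k' \<in> centralizer_set H F" "a' = (inv f', f' \<otimes> k')"
      using elimF[of a' F] i a' False by auto
    have p: "a \<otimes>\<^bsub>H \<times>\<times> H\<^esub> a' = (inv (f \<otimes> f'), f \<otimes> f' \<otimes> (k \<otimes> k'))"
      using fk fk' prod_lem(1,2)[OF F fk(1) fk'(1) fk(2) fk'(2)] by simp
    show ?thesis using p ph_F[OF cf(7)[OF fk(1) fk'(1)] F cf(5)[OF fk(2) fk'(2)]]
        ph_F[OF fk(1) F fk(2)] ph_F[OF fk'(1) F fk'(2)] fk(3) fk'(3) i False
        prod_lem(1)[OF F fk(1) fk'(1) fk(2) fk'(2)] by simp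
  qed
qed

end

sublocale A1ctx \<subseteq> X: hnn "H \<times>\<times> H" vld rvi SS ph by (rule hnn_inst)



context A1ctx
begin

definition actl :: "'a A1_letter \<Rightarrow> ((('a \<times> 'a) \<times> ('a set \<times> bool)) list \<times> ('a \<times> 'a))
    \<Rightarrow> ((('a \<times> 'a) \<times> ('a set \<times> bool)) list \<times> ('a \<times> 'a))" where
  "actl l p = (case l of
      Gen ab \<Rightarrow> (if fst ab \<in> carrier H \<and> snd ab \<in> carrier H then X.ba ab (fst p) (snd p) else p)
    | Stable F e \<Rightarrow> (if F \<in> fg_abelian_subgroups H then X.st (F, e) (fst p) (snd p) else p))"

definition act where "act w p = foldr actl w p"

definition nf where "nf p = (X.nfl (fst p) \<and> snd p \<in> carrier (H \<times>\<times> H))"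

lemma actl_pres: "nf p \<Longrightarrow> nf (actl l p)"
proof (cases l)
  case (Gen ab)
  assume "nf p"
  then show ?thesis using Gen X.ba_pres[of "fst p" ab "snd p"]
    by (auto simp: actl_def nf_def mem_Times_iff)
next
  case (Stable F e)
  assume "nf p"
  then show ?thesis using Stable X.st_pres[of "(F, e)" "fst p" "snd p"]
    by (auto simp: actl_def nf_def vld_def)
qed

lemma act_pres: "nf p \<Longrightarrow> nf (act w p)"
  by (induction w) (auto simp: act_def actl_pres)

lemma act_Cons: "act (l # w) p = actl l (act w p)" by (simp add: act_def)
lemma act_Nil: "act [] p = p" by (simp add: act_def)
lemma act_append: "act (u @ v) p = act u (act v p)" by (simp add: act_def)

lemma actl_R:
  assumes "nf p" "z \<in> carrier (H \<times>\<times> H)"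
  shows "actl l (fst p, snd p \<otimes>\<^bsub>H \<times>\<times> H\<^esub> z) = (fst (actl l p), snd (actl l p) \<otimes>\<^bsub>H \<times>\<times> H\<^esub> z)"
proof (cases l)
  case (Gen ab)
  then show ?thesis using assms X.ba_R[of "fst p" ab "snd p" z]
    by (auto simp: actl_def nf_def mem_Times_iff)
next
  case (Stable F e)
  then show ?thesis by (cases "fst p") (auto simp: actl_def)
qed

lemma act_R:
  assumes "nf p" "z \<in> carrier (H \<times>\<times> H)"
  shows "act w (fst p, snd p \<otimes>\<^bsub>H \<times>\<times> H\<^esub> z) = (fst (act w p), snd (act w p) \<otimes>\<^bsub>H \<times>\<times> H\<^esub> z)"
proof (induction w)
  case Nil then show ?case by (simp add: act_Nil)
next
  case (Cons l w)
  have "act (l # w) (fst p, snd p \<otimes>\<^bsub>H \<times>\<times> H\<^esub> z) = actl l (fst (act w p), snd (act w p) \<otimes>\<^bsub>H \<times>\<times> H\<^esub> z)"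
    using Cons by (simp add: act_Cons)
  also have "\<dots> = (fst (actl l (act w p)), snd (actl l (act w p)) \<otimes>\<^bsub>H \<times>\<times> H\<^esub> z)"
    using actl_R[OF act_pres[OF assms(1)] assms(2)] by simp
  finally show ?case by (simp add: act_Cons)
qed

lemma A1_eq_act: "A1_eq H u v \<Longrightarrow> nf p \<Longrightarrow> act u p = act v p"
proof (induction arbitrary: p rule: A1_eq.induct)
  case (refl w) then show ?case by simp
next
  case (sym u w) then show ?case by simp
next
  case (trans u v w) then show ?case by simp
next
  case (cong u w x y)
  then show ?case using act_pres[OF cong.prems] by (simp add: act_append)
next
  case unit
  then show ?case using X.ba_one[of "fst p" "snd p"] by (simp add: act_def actl_def nf_def)
next
  case (mult a b c d)
  have "X.ba (a, b) (fst (X.ba (c, d) (fst p) (snd p))) (snd (X.ba (c, d) (fst p) (snd p)))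
        = X.ba ((a, b) \<otimes>\<^bsub>H \<times>\<times> H\<^esub> (c, d)) (fst p) (snd p)"
    using X.ba_mult[of "fst p" "(a, b)" "(c, d)" "snd p"] mult by (simp add: nf_def)
  then show ?case using mult by (simp add: act_def actl_def)
next
  case (stable_inv F e)
  have "X.st (F, e) (fst (X.st (rvi (F, e)) (fst p) (snd p))) (snd (X.st (rvi (F, e)) (fst p) (snd p))) = p"
    using X.st_inv[of "(F, e)" "fst p" "snd p"] stable_inv by (simp add: nf_def vld_def)
  then show ?case using stable_inv by (simp add: act_def actl_def rvi_def)
next
  case (hnn F f k)
  note cf = cent_facts[OF hnn.hyps(1)]
  have fc: "f \<in> carrier H" "k \<in> carrier H" using cf(1,3) hnn.hyps by auto
  have v: "vld (F, True)" using hnn.hyps by (simp add: vld_def)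
  have aS: "(k, f \<otimes> k) \<in> SS (F, True)" using memT hnn.hyps by blast
  have e: "X.ba (k, f \<otimes> k) (fst p) (snd p) =
     X.st (F, True) (fst (X.ba (ph (F, True) (k, f \<otimes> k)) (fst (X.st (rvi (F, True)) (fst p) (snd p))) (snd (X.st (rvi (F, True)) (fst p) (snd p)))))
       (snd (X.ba (ph (F, True) (k, f \<otimes> k)) (fst (X.st (rvi (F, True)) (fst p) (snd p))) (snd (X.st (rvi (F, True)) (fst p) (snd p)))))"
    using X.hnn_rel[OF v aS] hnn.prems by (simp add: nf_def)
  have ph: "ph (F, True) (k, f \<otimes> k) = (inv f, f \<otimes> k)" using ph_T hnn.hyps by blast
  show ?case using e ph fc hnn.hyps(1) by (simp add: act_def actl_def rvi_def)
qed


definition linv :: "'a A1_letter \<Rightarrow> 'a A1_letter" where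
  "linv l = (case l of Gen ab \<Rightarrow> (if fst ab \<in> carrier H \<and> snd ab \<in> carrier H
      then Gen (inv (fst ab), inv (snd ab)) else Gen ab) | Stable F e \<Rightarrow> Stable F (\<not> e))"

lemma actl_linv: "nf p \<Longrightarrow> actl (linv l) (actl l p) = p"
proof (cases l)
  case (Gen ab)
  assume n: "nf p"
  obtain a b where ab: "ab = (a, b)" by fastforce
  show ?thesis
  proof (cases "a \<in> carrier H \<and> b \<in> carrier H")
    case True
    have "X.ba (inv a, inv b) (fst (X.ba (a, b) (fst p) (snd p))) (snd (X.ba (a, b) (fst p) (snd p)))
       = X.ba ((inv a, inv b) \<otimes>\<^bsub>H \<times>\<times> H\<^esub> (a, b)) (fst p) (snd p)"
      using X.ba_mult[of "fst p" "(inv a, inv b)" "(a, b)" "snd p"] n True by (simp add: nf_def)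
    also have "\<dots> = p" using X.ba_one[of "fst p" "snd p"] n True by (simp add: nf_def)
    finally show ?thesis using Gen ab True by (simp add: actl_def linv_def)
  next
    case False
    then show ?thesis using Gen ab by (auto simp: actl_def linv_def)
  qed
next
  case (Stable F e)
  assume n: "nf p"
  show ?thesis
  proof (cases "F \<in> fg_abelian_subgroups H")
    case True
    have "X.st (F, \<not> e) (fst (X.st (rvi (F, \<not> e)) (fst p) (snd p))) (snd (X.st (rvi (F, \<not> e)) (fst p) (snd p))) = p"
      using X.st_inv[of "(F, \<not> e)" "fst p" "snd p"] n True by (simp add: nf_def vld_def)
    then show ?thesis using Stable True by (simp add: actl_def linv_def rvi_def)
  next
    case False
    then show ?thesis using Stable by (simp add: actl_def linv_def)
  qed
qed

lemma act_inj: "nf p \<Longrightarrow> nf q \<Longrightarrow> act w p = act w q \<Longrightarrow> p = q"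
proof (induction w)
  case Nil then show ?case by (simp add: act_Nil)
next
  case (Cons l w)
  have "actl (linv l) (actl l (act w p)) = actl (linv l) (actl l (act w q))"
    using Cons.prems(3) by (simp add: act_Cons)
  then have "act w p = act w q" using actl_linv act_pres Cons.prems(1,2) by metis
  then show ?case using Cons.IH Cons.prems(1,2) by blast
qed

lemma main:
  assumes g: "g \<in> carrier H" and h: "h \<in> carrier H"
    and c: "A1_conjugate H (A1_incl H g) (A1_incl H h)"
  shows "\<exists>x\<in>carrier H. x \<otimes> g \<otimes> inv x = h"
proof -
  obtain w w' where e1: "A1_eq H (w @ w') []" and e2: "A1_eq H (w @ [Gen (g, \<one>)] @ w') [Gen (h, \<one>)]"
    using c by (auto simp: A1_conjugate_def A1_incl_def)
  define e0 :: "((('a \<times> 'a) \<times> ('a set \<times> bool)) list \<times> ('a \<times> 'a))" where "e0 = ([], (\<one>, \<one>))"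
  have ne0: "nf e0" by (simp add: e0_def nf_def)
  define u where "u = act w e0"
  have nu: "nf u" using u_def act_pres ne0 by simp
  have inv1: "\<And>p. nf p \<Longrightarrow> act w (act w' p) = p"
    using A1_eq_act[OF e1] by (simp add: act_append act_Nil)
  have "act w (act w' u) = act w e0" using inv1[OF nu] u_def by simp
  then have wu: "act w' u = e0" using act_inj[OF act_pres[OF nu] ne0] by blast
  have "act w (act [Gen (g, \<one>)] (act w' u)) = act [Gen (h, \<one>)] u"
    using A1_eq_act[OF e2 nu] by (simp add: act_append act_Cons act_Nil)
  moreover have "act [Gen (g, \<one>)] e0 = (fst e0, snd e0 \<otimes>\<^bsub>H \<times>\<times> H\<^esub> (g, \<one>))"
    using g by (simp add: act_def actl_def e0_def)
  ultimately have "X.ba (h, \<one>) (fst u) (snd u) = (fst u, snd u \<otimes>\<^bsub>H \<times>\<times> H\<^esub> (g, \<one>))"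
    using wu act_R[OF ne0, of "(g, \<one>)" w] g h u_def by (simp add: act_def actl_def)
  define Q where "Q z = (\<exists>z1 x. z = (z1, \<one>) \<and> z1 \<in> carrier H \<and> x \<in> carrier H \<and> x \<otimes> z1 \<otimes> inv x = h)"
    for z :: "'a \<times> 'a"
  have Qconj: "\<And>z c. Q z \<Longrightarrow> z \<in> carrier (H \<times>\<times> H) \<Longrightarrow> c \<in> carrier (H \<times>\<times> H) \<Longrightarrow>
      Q (inv\<^bsub>H \<times>\<times> H\<^esub> c \<otimes>\<^bsub>H \<times>\<times> H\<^esub> z \<otimes>\<^bsub>H \<times>\<times> H\<^esub> c)"
  proof -
    fix z c assume Qz: "Q z" and zc: "z \<in> carrier (H \<times>\<times> H)" and cc: "c \<in> carrier (H \<times>\<times> H)"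
    obtain z1 x where zx: "z = (z1, \<one>)" "z1 \<in> carrier H" "x \<in> carrier H" "x \<otimes> z1 \<otimes> inv x = h"
      using Qz Q_def by auto
    obtain c1 c2 where c12: "c = (c1, c2)" "c1 \<in> carrier H" "c2 \<in> carrier H" using cc by auto
    have eq: "inv\<^bsub>H \<times>\<times> H\<^esub> c \<otimes>\<^bsub>H \<times>\<times> H\<^esub> z \<otimes>\<^bsub>H \<times>\<times> H\<^esub> c = (inv c1 \<otimes> z1 \<otimes> c1, \<one>)"
      using c12 zx invHH by simp
    have "x \<otimes> c1 \<otimes> (inv c1 \<otimes> z1 \<otimes> c1) \<otimes> inv (x \<otimes> c1) = h"
      using zx c12 by (simp add: m_assoc inv_mult_group)
    then show "Q (inv\<^bsub>H \<times>\<times> H\<^esub> c \<otimes>\<^bsub>H \<times>\<times> H\<^esub> z \<otimes>\<^bsub>H \<times>\<times> H\<^esub> c)"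
      unfolding Q_def using eq zx c12 by (intro exI[of _ "inv c1 \<otimes> z1 \<otimes> c1"] exI[of _ "x \<otimes> c1"]) simp
  qed
  have Qphi: "\<And>z i. Q z \<Longrightarrow> vld i \<Longrightarrow> z \<in> SS i \<Longrightarrow> Q (ph i z)"
  proof -
    fix z i assume "Q z"
    then obtain z1 where z: "z = (z1, \<one>)" "z1 \<in> carrier H" and "Q z" using Q_def by auto
    have "ph i z = z" using z by (simp add: ph_def)
    then show "Q (ph i z)" using \<open>Q z\<close> by simp
  qed
  have Qh: "Q (h, \<one>)" unfolding Q_def using h by (intro exI[of _ h] exI[of _ \<one>]) simp
  have snu: "snd u \<in> carrier (H \<times>\<times> H)" "X.nfl (fst u)" using nu by (auto simp: nf_def)
  obtain x' where x': "Q x'" "x' \<in> carrier (H \<times>\<times> H)" "x' \<otimes>\<^bsub>H \<times>\<times> H\<^esub> snd u = snd u \<otimes>\<^bsub>H \<times>\<times> H\<^esub> (g, \<one>)"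
    using X.fixed_point[of Q, OF Qconj Qphi snu(2) _ snu(1) _ Qh \<open>X.ba (h, \<one>) (fst u) (snd u) = _\<close>] g h
    by auto
  obtain z1 x where zx: "x' = (z1, \<one>)" "z1 \<in> carrier H" "x \<in> carrier H" "x \<otimes> z1 \<otimes> inv x = h"
    using x'(1) Q_def by auto
  obtain b1 b2 where b: "snd u = (b1, b2)" "b1 \<in> carrier H" "b2 \<in> carrier H" using snu(1) by auto
  have bg: "z1 \<otimes> b1 = b1 \<otimes> g" using x'(3) zx b by simp
  have "x \<otimes> b1 \<otimes> g \<otimes> inv (x \<otimes> b1) = x \<otimes> (b1 \<otimes> g) \<otimes> (inv b1 \<otimes> inv x)"
    using zx b g by (simp add: m_assoc inv_mult_group)
  also have "\<dots> = x \<otimes> (z1 \<otimes> b1) \<otimes> (inv b1 \<otimes> inv x)" using bg by simp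
  also have "\<dots> = h" using zx b by (simp add: m_assoc)
  finally show ?thesis using zx b by blast
qed

end

theorem lemma4p6:
  fixes H :: "('a, 'b) monoid_scheme"
  assumes "group H" and "g \<in> carrier H" and "h \<in> carrier H"
    and "A1_conjugate H (A1_incl H g) (A1_incl H h)"
  shows "\<exists>x\<in>carrier H. x \<otimes>\<^bsub>H\<^esub> g \<otimes>\<^bsub>H\<^esub> inv\<^bsub>H\<^esub> x = h"
proof -
  interpret A: A1ctx H using assms(1) by (simp add: A1ctx_def)
  show ?thesis by (rule A.main[OF assms(2-4)])
qed

end
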